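(* Let $A=\mathrm{diag}([-1],G_1,\dots,G_m,[1])\in\mathbb{R}^{n\times n}$, $m\geq 1$, where each of the $1\times1$ blocks $[-1]$ and $[1]$ may or may not be present, with $G_j=\begin{bmatrix}c_j&s_j\\-s_j&c_j\end{bmatrix}$, $c_j^2+s_j^2=1$, $s_j\neq 0$, and $-1=c_0<c_1<c_2<\cdots<c_m<1=c_{m+1}$. Let $v_0\in\mathbb{R}^n$ be a unit norm vector with $d(A,v_0)\geq 2$. Suppose that $v_0^{(\ell)}\neq 0$ for some $\ell$ with $1\leq\ell\leq m$, and that $v_0^{(j)}\neq 0$ for some block index $j$ with $0\leq j\leq m+1$ (for a block that is present) such that $c_\ell c_j\leq 0$. Then for the iteration ACI($1$) below, $\alpha_k\to 0$ and $\beta_k\to 0$ as $k\to\infty$.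
   Context: Block partitioning: every $v\in\mathbb{R}^n$ is written as $v=[v^{(0)};v^{(1)};\dots;v^{(m)};v^{(m+1)}]$ with $v^{(0)}\in\mathbb{R}$ (present only if the block $[-1]$ is present), $v^{(j)}\in\mathbb{R}^2$ for $j=1,\dots,m$ (conforming with the blocks $G_j$), and $v^{(m+1)}\in\mathbb{R}$ (present only if the block $[1]$ is present). ACI($1$): for $k=0,1,2,\dots$: $\widetilde w_k=(A-\alpha_kI)v_k$ with $\alpha_k=v_k^TAv_k$; $w_k=\widetilde w_k/\|\widetilde w_k\|$; $\widetilde v_{k+1}=(A^T-\beta_kI)w_k$ with $\beta_k=w_k^TAw_k$; $v_{k+1}=\widetilde v_{k+1}/\|\widetilde v_{k+1}\|$. $d(A,v)$ is the grade of $v$ w.r.t. $A$ (degree of the monic polynomial $p$ of smallest degree with $p(A)v=0$); $\|\cdot\|$ is the Euclidean norm. *)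

theory Defs
  imports "Jordan_Normal_Form.Matrix" "HOL-Computational_Algebra.Polynomial"
begin

text \<open>Block structure of A = diag([-1], G_1, ..., G_m, [1]).
  p0: whether the leading 1x1 block [-1] is present; p1: whether the trailing
  1x1 block [1] is present.  Indices are 0-based.\<close>

definition blk_off :: "bool \<Rightarrow> nat" where
  "blk_off p0 = (if p0 then 1 else 0)"

definition aci_dim :: "nat \<Rightarrow> bool \<Rightarrow> bool \<Rightarrow> nat" where
  "aci_dim m p0 p1 = blk_off p0 + 2 * m + (if p1 then 1 else 0)"

text \<open>The matrix A; G_j = [[c j, s j], [- s j, c j]] occupies rows/columns
  blk_off p0 + 2(j-1) and blk_off p0 + 2(j-1) + 1.\<close>
definition aci_mat :: "nat \<Rightarrow> bool \<Rightarrow> bool \<Rightarrow> (nat \<Rightarrow> real) \<Rightarrow> (nat \<Rightarrow> real) \<Rightarrow> real mat" where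
  "aci_mat m p0 p1 c s =
     (let n = aci_dim m p0 p1; off = blk_off p0 in
      mat n n (\<lambda>(i, k).
        if p0 \<and> i = 0 \<and> k = 0 then -1
        else if p1 \<and> i = n - 1 \<and> k = n - 1 then 1
        else if off \<le> i \<and> i < off + 2 * m \<and> off \<le> k \<and> k < off + 2 * m
                \<and> (i - off) div 2 = (k - off) div 2 then
          (let j = (i - off) div 2 + 1 in
             if i = k then c j else if i < k then s j else - s j)
        else 0))"

text \<open>Index set of the block v^(j): j = 0 is the [-1] block, 1 \<le> j \<le> m are the
  G_j blocks, j = m+1 is the [1] block.\<close>
definition blk_idx :: "nat \<Rightarrow> bool \<Rightarrow> bool \<Rightarrow> nat \<Rightarrow> nat set" where
  "blk_idx m p0 p1 j =
     (if j = 0 then {0}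
      else if j = m + 1 then {aci_dim m p0 p1 - 1}
      else {blk_off p0 + 2 * (j - 1), blk_off p0 + 2 * (j - 1) + 1})"

definition blk_present :: "nat \<Rightarrow> bool \<Rightarrow> bool \<Rightarrow> nat \<Rightarrow> bool" where
  "blk_present m p0 p1 j = (j \<le> m + 1 \<and> (j = 0 \<longrightarrow> p0) \<and> (j = m + 1 \<longrightarrow> p1))"

definition blk_nonzero :: "nat \<Rightarrow> bool \<Rightarrow> bool \<Rightarrow> real vec \<Rightarrow> nat \<Rightarrow> bool" where
  "blk_nonzero m p0 p1 v j = (\<exists>i\<in>blk_idx m p0 p1 j. v $ i \<noteq> 0)"

definition vnorm :: "real vec \<Rightarrow> real" where
  "vnorm v = sqrt (v \<bullet> v)"

definition normalize_vec :: "real vec \<Rightarrow> real vec" where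
  "normalize_vec v = (1 / vnorm v) \<cdot>\<^sub>v v"

definition poly_mat_vec :: "real mat \<Rightarrow> real poly \<Rightarrow> real vec \<Rightarrow> real vec" where
  "poly_mat_vec A p v = vec (dim_row A) (\<lambda>r. \<Sum>i\<le>degree p. coeff p i * ((A ^\<^sub>m i) *\<^sub>v v) $ r)"

definition grade :: "real mat \<Rightarrow> real vec \<Rightarrow> nat" where
  "grade A v = (LEAST d. \<exists>p :: real poly. lead_coeff p = 1 \<and> degree p = d
                    \<and> poly_mat_vec A p v = 0\<^sub>v (dim_row A))"

definition aci_alpha :: "real mat \<Rightarrow> real vec \<Rightarrow> real" where
  "aci_alpha A v = v \<bullet> (A *\<^sub>v v)"

definition aci_w :: "real mat \<Rightarrow> real vec \<Rightarrow> real vec" where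
  "aci_w A v = normalize_vec (A *\<^sub>v v - aci_alpha A v \<cdot>\<^sub>v v)"

definition aci_beta :: "real mat \<Rightarrow> real vec \<Rightarrow> real" where
  "aci_beta A w = w \<bullet> (A *\<^sub>v w)"

definition aci_next :: "real mat \<Rightarrow> real vec \<Rightarrow> real vec" where
  "aci_next A v = (let w = aci_w A v in
                     normalize_vec (transpose_mat A *\<^sub>v w - aci_beta A w \<cdot>\<^sub>v w))"

definition aci_v :: "real mat \<Rightarrow> real vec \<Rightarrow> nat \<Rightarrow> real vec" where
  "aci_v A v0 k = (aci_next A ^^ k) v0"

definition aci_alpha_seq :: "real mat \<Rightarrow> real vec \<Rightarrow> nat \<Rightarrow> real" where
  "aci_alpha_seq A v0 k = aci_alpha A (aci_v A v0 k)"

definition aci_beta_seq :: "real mat \<Rightarrow> real vec \<Rightarrow> nat \<Rightarrow> real" where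
  "aci_beta_seq A v0 k = aci_beta A (aci_w A (aci_v A v0 k))"

end

theory Submission
  imports Defs
begin


lemma ln_wavg:
  fixes X Y l :: real
  assumes "X > 0" "Y > 0" "0 \<le> l" "l \<le> 1"
  shows "l * ln X + (1 - l) * ln Y \<le> ln (l * X + (1 - l) * Y)"
proof -
  define A where "A = l * X + (1 - l) * Y"
  have A: "A > 0"
  proof (cases "l = 0")
    case True thus ?thesis using assms by (simp add: A_def)
  next
    case False hence "l * X > 0" using assms by simp
    moreover have "(1 - l) * Y \<ge> 0" using assms by simp
    ultimately show ?thesis unfolding A_def by linarith
  qed
  have "ln (X / A) \<le> X / A - 1" using assms A by (intro ln_le_minus_one) auto
  moreover have "ln (Y / A) \<le> Y / A - 1" using assms A by (intro ln_le_minus_one) auto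
  ultimately have "l * ln (X / A) + (1 - l) * ln (Y / A) \<le> l * (X / A - 1) + (1 - l) * (Y / A - 1)"
    using assms by (intro add_mono mult_left_mono) auto
  also have "\<dots> = 0" using A unfolding A_def by (simp add: field_simps)
  finally have "l * (ln X - ln A) + (1 - l) * (ln Y - ln A) \<le> 0"
    using assms A by (simp add: ln_div)
  thus ?thesis unfolding A_def[symmetric] by (simp add: algebra_simps)
qed

lemma ln_f_bound:
  fixes a c :: real
  assumes "\<bar>a\<bar> < 1" "-1 \<le> c" "c \<le> 1"
  shows "(1 + c) * ln (1 - a) + (1 - c) * ln (1 + a) \<le> ln (1 + a^2 - 2*a*c)"
proof -
  have p1: "1 - a > 0" "1 + a > 0" using assms by auto
  have w: "((1+c)/2) * ln ((1-a)^2) + (1 - (1+c)/2) * ln ((1+a)^2)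
        \<le> ln (((1+c)/2) * (1-a)^2 + (1 - (1+c)/2) * (1+a)^2)"
    using assms p1 by (intro ln_wavg) auto
  have eq: "((1+c)/2) * (1-a)^2 + (1 - (1+c)/2) * (1+a)^2 = 1 + a^2 - 2*a*c"
    by (simp add: field_simps power2_eq_square)
  have l2: "ln ((1-a)^2) = 2 * ln (1-a)" "ln ((1+a)^2) = 2 * ln (1+a)"
    using p1 by (simp_all add: ln_realpow)
  have e2: "((1+c)/2) * (2 * ln (1-a)) + (1 - (1+c)/2) * (2 * ln (1+a)) = (1 + c) * ln (1 - a) + (1 - c) * ln (1 + a)"
    by (simp add: field_simps)
  show ?thesis using w[unfolded eq l2] e2 by linarith
qed

lemma decay_to_zero:
  fixes x :: "nat \<Rightarrow> real"
  assumes nn: "\<And>k. 0 \<le> x k" and st: "\<And>k. x (Suc k) \<le> x k * (1 - e * (x k)^2)" and e: "e > 0"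
  shows "x \<longlonglongrightarrow> 0"
proof -
  have dec: "decseq x"
  proof (rule decseq_SucI)
    fix k have "x k * (1 - e * (x k)^2) \<le> x k" using nn[of k] e by (simp add: mult_left_le)
    thus "x (Suc k) \<le> x k" using st[of k] by linarith
  qed
  then obtain L where L: "x \<longlonglongrightarrow> L" using decseq_convergent[of x 0] nn by blast
  have L0: "L \<ge> 0" using nn by (intro LIMSEQ_le_const[OF L]) auto
  have "(\<lambda>k. x (Suc k)) \<longlonglongrightarrow> L" using L by (rule LIMSEQ_Suc)
  moreover have "(\<lambda>k. x k * (1 - e * (x k)^2)) \<longlonglongrightarrow> L * (1 - e * L^2)"
    using L by (intro tendsto_intros)
  ultimately have "L \<le> L * (1 - e * L^2)" using st by (intro LIMSEQ_le) auto
  hence "e * L^3 \<le> 0" by (simp add: algebra_simps power3_eq_cube power2_eq_square)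
  hence "L \<le> 0" using e
    by (metis linorder_not_le mult_pos_pos zero_less_power)
  with L0 L show ?thesis by simp
qed

lemma RL1:
  fixes a M2 d k :: real
  assumes D: "d * a^2 \<le> M2 - a^2" and E: "d * k \<le> 1 - M2" and d: "0 \<le> d" and k: "0 < k" and a: "a^2 < 1"
  shows "\<bar>(a*(1+a^2) - 2*a*M2)/(1-a^2)\<bar> \<le> \<bar>a\<bar> * (1 - 2*d*min 1 k * a^2)"
proof -
  define q where "q = 2*d*min 1 k * a^2"
  have m1: "min 1 k \<le> 1" "0 \<le> min 1 k" "min 1 k \<le> k" using k by auto
  have a2: "0 \<le> a^2" by simp
  have "min 1 k * a^2 \<le> 1 * a^2" using m1 a2 by (intro mult_right_mono) auto
  hence "d * (min 1 k * a^2) \<le> d * a^2" using d by (intro mult_left_mono) auto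
  hence q1: "q \<le> 2*d*a^2" unfolding q_def by (simp add: algebra_simps)
  have "min 1 k * a^2 \<le> min 1 k * 1" using m1 a by (intro mult_left_mono) auto
  hence "min 1 k * a^2 \<le> k" using m1 by linarith
  hence "d * (min 1 k * a^2) \<le> d * k" using d by (rule mult_left_mono)
  hence q2: "q \<le> 2*d*k" unfolding q_def by (simp add: algebra_simps)
  have q0: "0 \<le> q" unfolding q_def using d m1 by simp
  have ab: "\<bar>1 + a^2 - 2*M2\<bar> \<le> 1 - a^2 - q" using D E q1 q2 by (simp add: abs_le_iff)
  have pos: "0 < 1 - a^2" using a by simp
  have "\<bar>(a*(1+a^2) - 2*a*M2)/(1-a^2)\<bar> = \<bar>a\<bar> * \<bar>1 + a^2 - 2*M2\<bar> / (1 - a^2)"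
    using pos by (simp add: abs_mult[symmetric] algebra_simps)
  also have "\<dots> \<le> \<bar>a\<bar> * (1 - a^2 - q) / (1 - a^2)"
    using ab pos by (intro divide_right_mono mult_left_mono) auto
  also have "\<dots> = \<bar>a\<bar> * (1 - q / (1 - a^2))" using pos by (simp add: field_simps)
  also have "\<dots> \<le> \<bar>a\<bar> * (1 - q)"
  proof -
    have "q * (1 - a^2) \<le> q" using q0 a2 by (simp add: mult_left_le)
    hence "q \<le> q / (1 - a^2)" using pos by (simp add: le_divide_eq)
    thus ?thesis by (intro mult_left_mono) auto
  qed
  finally show ?thesis unfolding q_def .
qed




locale bs =
  fixes n :: nat and pr :: "nat \<Rightarrow> nat" and cc :: "nat \<Rightarrow> real"
  assumes pr_lt: "i < n \<Longrightarrow> pr i < n"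
    and pr_pr: "i < n \<Longrightarrow> pr (pr i) = i"
    and cc_pr: "i < n \<Longrightarrow> cc (pr i) = cc i"
begin

definition Mf :: "real vec \<Rightarrow> (nat \<Rightarrow> real) \<Rightarrow> real" where
  "Mf u h = (\<Sum>i\<in>{0..<n}. h i * (u$i)^2)"

lemma reindex: "(\<Sum>i\<in>{0..<n}. F (pr i)) = (\<Sum>i\<in>{0..<n}. (F i :: real))"
  by (rule sum.reindex_bij_witness[where i=pr and j=pr]) (auto simp: pr_lt pr_pr)

lemma neg_self: assumes "\<And>i. i < n \<Longrightarrow> F (pr i) = - F i" shows "(\<Sum>i\<in>{0..<n}. (F i :: real)) = 0"
proof -
  have "(\<Sum>i\<in>{0..<n}. F i) = (\<Sum>i\<in>{0..<n}. F (pr i))" by (rule reindex[symmetric])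
  also have "\<dots> = (\<Sum>i\<in>{0..<n}. - F i)" using assms by (intro sum.cong) auto
  finally show ?thesis by (simp add: sum_negf)
qed

definition opm :: "real mat \<Rightarrow> (nat \<Rightarrow> real) \<Rightarrow> bool" where
  "opm L \<tau> \<longleftrightarrow> L \<in> carrier_mat n n \<and>
     (\<forall>i<n. \<forall>k<n. L $$ (i,k) = (if k = i then cc i else if k = pr i then \<tau> i else 0))
     \<and> (\<forall>i<n. \<tau> (pr i) = - \<tau> i) \<and> (\<forall>i<n. (cc i)^2 + (\<tau> i)^2 = 1)"

lemma opm_apply:
  assumes L: "opm L \<tau>" and u: "u \<in> carrier_vec n" and i: "i < n"
  shows "(L *\<^sub>v u) $ i = cc i * u$i + \<tau> i * u$(pr i)"
proof -
  have Ld: "dim_row L = n" "dim_col L = n" using L by (auto simp: opm_def)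
  have ud: "dim_vec u = n" using u by auto
  have tz: "pr i = i \<Longrightarrow> \<tau> i = 0" using L i unfolding opm_def by force
  have "(L *\<^sub>v u) $ i = (\<Sum>k\<in>{0..<n}. L $$ (i,k) * u$k)"
    using i Ld ud by (simp add: scalar_prod_def row_def)
  also have "\<dots> = (\<Sum>k\<in>{0..<n}. (if k = i then cc i * u$i else 0) + (if k = pr i then \<tau> i * u$(pr i) else 0))"
    using L i tz unfolding opm_def by (intro sum.cong) auto
  also have "\<dots> = cc i * u$i + \<tau> i * u$(pr i)"
    using i pr_lt[OF i] by (simp add: sum.distrib)
  finally show ?thesis .
qed

lemma opm_M:
  assumes L: "opm L \<tau>" and u: "u \<in> carrier_vec n" and h: "\<And>i. i < n \<Longrightarrow> h (pr i) = h i"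
  shows "Mf (L *\<^sub>v u - t \<cdot>\<^sub>v u) h = Mf u (\<lambda>i. h i * (1 + t^2 - 2*t*cc i))"
proof -
  have tp: "\<And>i. i < n \<Longrightarrow> \<tau> (pr i) = - \<tau> i" and one: "\<And>i. i < n \<Longrightarrow> (cc i)^2 + (\<tau> i)^2 = 1"
    using L unfolding opm_def by auto
  have Ld: "dim_row L = n" using L by (auto simp: opm_def)
  define X where "X = (\<Sum>i\<in>{0..<n}. h i * (cc i - t) * \<tau> i * (u$i * u$(pr i)))"
  define Y where "Y = (\<Sum>i\<in>{0..<n}. h i * (\<tau> i)^2 * (u$(pr i))^2)"
  define Z where "Z = (\<Sum>i\<in>{0..<n}. h i * (cc i - t)^2 * (u$i)^2)"
  have X0: "X = 0" unfolding X_def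
    by (rule neg_self) (simp add: h tp cc_pr pr_pr pr_lt mult.commute)
  have Yeq: "Y = (\<Sum>i\<in>{0..<n}. h i * (\<tau> i)^2 * (u$i)^2)"
  proof -
    have "Y = (\<Sum>i\<in>{0..<n}. (\<lambda>i. h i * (\<tau> i)^2 * (u$i)^2) (pr i))"
      unfolding Y_def by (intro sum.cong) (auto simp: h tp pr_lt)
    thus ?thesis using reindex[of "\<lambda>i. h i * (\<tau> i)^2 * (u$i)^2"] by simp
  qed
  have "Mf (L *\<^sub>v u - t \<cdot>\<^sub>v u) h = (\<Sum>i\<in>{0..<n}. h i * (cc i - t)^2 * (u$i)^2
          + 2 * (h i * (cc i - t) * \<tau> i * (u$i * u$(pr i))) + h i * (\<tau> i)^2 * (u$(pr i))^2)"
    unfolding Mf_def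
  proof (intro sum.cong refl)
    fix i assume "i \<in> {0..<n}" hence i: "i < n" by auto
    have e: "(L *\<^sub>v u - t \<cdot>\<^sub>v u) $ i = (cc i - t) * u$i + \<tau> i * u$(pr i)"
      using i u Ld opm_apply[OF L u i] by (simp add: algebra_simps)
    show "h i * ((L *\<^sub>v u - t \<cdot>\<^sub>v u) $ i)^2 = h i * (cc i - t)^2 * (u$i)^2
          + 2 * (h i * (cc i - t) * \<tau> i * (u$i * u$(pr i))) + h i * (\<tau> i)^2 * (u$(pr i))^2"
      unfolding e by (simp add: power2_eq_square algebra_simps)
  qed
  also have "\<dots> = Z + 2 * X + Y" unfolding X_def Y_def Z_def by (simp add: sum.distrib sum_distrib_left)
  also have "\<dots> = (\<Sum>i\<in>{0..<n}. h i * ((cc i - t)^2 + (\<tau> i)^2) * (u$i)^2)"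
    unfolding X0 Yeq Z_def by (simp add: sum.distrib[symmetric] algebra_simps)
  also have "\<dots> = Mf u (\<lambda>i. h i * (1 + t^2 - 2*t*cc i))"
    unfolding Mf_def
  proof (intro sum.cong refl)
    fix i assume "i \<in> {0..<n}" hence i: "i < n" by auto
    have "(cc i - t)^2 + (\<tau> i)^2 = 1 + t^2 - 2*t*cc i" using one[OF i]
      by (simp add: power2_diff algebra_simps)
    thus "h i * ((cc i - t)^2 + (\<tau> i)^2) * (u$i)^2 = h i * (1 + t^2 - 2*t*cc i) * (u$i)^2" by simp
  qed
  finally show ?thesis .
qed

lemma opm_alpha:
  assumes L: "opm L \<tau>" and u: "u \<in> carrier_vec n"
  shows "u \<bullet> (L *\<^sub>v u) = Mf u cc"
proof -
  have tp: "\<And>i. i < n \<Longrightarrow> \<tau> (pr i) = - \<tau> i" using L unfolding opm_def by auto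
  have Ld: "dim_row L = n" using L by (auto simp: opm_def)
  have "u \<bullet> (L *\<^sub>v u) = (\<Sum>i\<in>{0..<n}. cc i * (u$i)^2 + \<tau> i * (u$i * u$(pr i)))"
    unfolding scalar_prod_def using Ld
    by (intro sum.cong) (auto simp: opm_apply[OF L u] power2_eq_square algebra_simps simp del: index_mult_mat_vec)
  also have "\<dots> = Mf u cc + (\<Sum>i\<in>{0..<n}. \<tau> i * (u$i * u$(pr i)))"
    unfolding Mf_def by (simp add: sum.distrib)
  also have "(\<Sum>i\<in>{0..<n}. \<tau> i * (u$i * u$(pr i))) = 0"
    by (rule neg_self) (simp add: tp pr_pr mult.commute)
  finally show ?thesis by simp
qed

lemma Mf_smult: "u \<in> carrier_vec n \<Longrightarrow> Mf (r \<cdot>\<^sub>v u) h = r^2 * Mf u h"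
  unfolding Mf_def by (simp add: sum_distrib_left power_mult_distrib algebra_simps)

lemma vnorm_Mf: "u \<in> carrier_vec n \<Longrightarrow> vnorm u = sqrt (Mf u (\<lambda>_. 1))"
  unfolding vnorm_def Mf_def scalar_prod_def by (simp add: power2_eq_square)

lemma Mf_normalize:
  assumes "u \<in> carrier_vec n" "Mf u (\<lambda>_. 1) > 0"
  shows "Mf (normalize_vec u) h = Mf u h / Mf u (\<lambda>_. 1)"
  using assms unfolding normalize_vec_def
  by (simp add: Mf_smult vnorm_Mf power_divide)

end



locale dyn = bs +
  fixes hx hy :: "nat \<Rightarrow> real" and gx gy px py :: real
  assumes hx_pr: "i < n \<Longrightarrow> hx (pr i) = hx i" and hy_pr: "i < n \<Longrightarrow> hy (pr i) = hy i"
    and hx0: "0 \<le> hx i" and hx1: "hx i \<le> 1" and hy0: "0 \<le> hy i" and hy1: "hy i \<le> 1"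
    and hx_cc: "i < n \<Longrightarrow> hx i \<noteq> 0 \<Longrightarrow> cc i = gx"
    and hy_cc: "i < n \<Longrightarrow> hy i \<noteq> 0 \<Longrightarrow> cc i = gy"
    and cc_bd: "i < n \<Longrightarrow> (cc i)^2 \<le> 1"
    and gx_bd: "gx^2 < 1" and gy_bd: "gy^2 \<le> 1"
    and px0: "0 \<le> px" and py0: "0 \<le> py" and pxy: "px + py = 1" and mean0: "px*gx + py*gy = 0"
    and kap: "0 < px*(1-gx^2) + py*(1-gy^2)"
begin

definition "Px u = Mf u hx"
definition "Py u = Mf u hy"
definition "Phi u = px * ln (Px u) + py * ln (Py u)"
definition "hs L u = normalize_vec (L *\<^sub>v u - Mf u cc \<cdot>\<^sub>v u)"
definition "Inv \<Phi>0 u \<longleftrightarrow> u \<in> carrier_vec n \<and> Mf u (\<lambda>_. 1) = 1 \<and> Px u > 0 \<and> Py u > 0 \<and> \<Phi>0 \<le> Phi u"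
definition "dl \<Phi>0 = min (if px > 0 then exp (\<Phi>0/px) else 1) (if py > 0 then exp (\<Phi>0/py) else 1)"
definition "kp = px*(1-gx^2) + py*(1-gy^2)"
definition "eta \<Phi>0 = 2 * dl \<Phi>0 * min 1 kp"

lemma dl_pos: "dl \<Phi>0 > 0" by (simp add: dl_def)
lemma kp_pos: "kp > 0" using kap by (simp add: kp_def)
lemma eta_pos: "eta \<Phi>0 > 0" using dl_pos kp_pos by (simp add: eta_def)

lemma Mf_mono: "(\<And>i. i < n \<Longrightarrow> h i \<le> g i) \<Longrightarrow> Mf u h \<le> Mf u g"
  unfolding Mf_def by (intro sum_mono mult_right_mono) auto

lemma blkx: "Mf u (\<lambda>i. hx i * F (cc i)) = F gx * Px u"
  unfolding Mf_def Px_def sum_distrib_left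
proof (intro sum.cong refl)
  fix i assume "i \<in> {0..<n}" hence i: "i < n" by auto
  show "hx i * F (cc i) * (u $ i)\<^sup>2 = F gx * (hx i * (u $ i)\<^sup>2)"
    by (cases "hx i = 0") (auto simp: hx_cc[OF i])
qed

lemma blky: "Mf u (\<lambda>i. hy i * F (cc i)) = F gy * Py u"
  unfolding Mf_def Py_def sum_distrib_left
proof (intro sum.cong refl)
  fix i assume "i \<in> {0..<n}" hence i: "i < n" by auto
  show "hy i * F (cc i) * (u $ i)\<^sup>2 = F gy * (hy i * (u $ i)\<^sup>2)"
    by (cases "hy i = 0") (auto simp: hy_cc[OF i])
qed

lemma Mf_poly:
  "Mf u (\<lambda>i. A + B * cc i + C * (cc i)^2) = A * Mf u (\<lambda>_. 1) + B * Mf u cc + C * Mf u (\<lambda>i. (cc i)^2)"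
  unfolding Mf_def by (simp add: sum.distrib sum_distrib_left algebra_simps)

lemma sq_bd: "(g::real)^2 \<le> 1 \<Longrightarrow> -1 \<le> g \<and> g \<le> 1"
  using abs_square_le_1[of g] by (simp add: abs_le_iff)

lemma half_step:
  assumes L: "opm L \<tau>" and I: "Inv \<Phi>0 u"
  shows "Inv \<Phi>0 (hs L u) \<and> \<bar>Mf (hs L u) cc\<bar> \<le> \<bar>Mf u cc\<bar> * (1 - eta \<Phi>0 * (Mf u cc)^2)"
proof -
  define a where "a = Mf u cc"
  define M2 where "M2 = Mf u (\<lambda>i. (cc i)^2)"
  define d where "d = dl \<Phi>0"
  have u: "u \<in> carrier_vec n" and S1: "Mf u (\<lambda>_. 1) = 1" and Pxp: "Px u > 0" and Pyp: "Py u > 0"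
    and PhiI: "\<Phi>0 \<le> Phi u"
    using I by (auto simp: Inv_def)
  have d0: "0 < d" using dl_pos by (simp add: d_def)
  have Px1: "Px u \<le> 1" unfolding Px_def using Mf_mono[of hx "\<lambda>_. 1" u] hx1 S1 by auto
  have Py1: "Py u \<le> 1" unfolding Py_def using Mf_mono[of hy "\<lambda>_. 1" u] hy1 S1 by auto
  have lPx: "ln (Px u) \<le> 0" using Pxp Px1 by simp
  have lPy: "ln (Py u) \<le> 0" using Pyp Py1 by simp
  have dPx: "px * d \<le> px * Px u"
  proof (cases "px > 0")
    case True
    have "py * ln (Py u) \<le> 0" using py0 lPy by (simp add: mult_nonneg_nonpos)
    hence "\<Phi>0 \<le> px * ln (Px u)" using PhiI unfolding Phi_def by linarith
    hence "\<Phi>0 / px \<le> ln (Px u)" using True by (simp add: divide_le_eq mult.commute)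
    hence "exp (\<Phi>0 / px) \<le> Px u" using Pxp by (metis exp_le_cancel_iff exp_ln)
    moreover have "d \<le> exp (\<Phi>0 / px)" using True by (simp add: d_def dl_def)
    ultimately show ?thesis using True by (intro mult_left_mono) auto
  qed (use px0 in auto)
  have dPy: "py * d \<le> py * Py u"
  proof (cases "py > 0")
    case True
    have "px * ln (Px u) \<le> 0" using px0 lPx by (simp add: mult_nonneg_nonpos)
    hence "\<Phi>0 \<le> py * ln (Py u)" using PhiI unfolding Phi_def by linarith
    hence "\<Phi>0 / py \<le> ln (Py u)" using True by (simp add: divide_le_eq mult.commute)
    hence "exp (\<Phi>0 / py) \<le> Py u" using Pyp by (metis exp_le_cancel_iff exp_ln)
    moreover have "d \<le> exp (\<Phi>0 / py)" using True by (simp add: d_def dl_def)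
    ultimately show ?thesis using True by (intro mult_left_mono) auto
  qed (use py0 in auto)
  have Var: "Mf u (\<lambda>i. (cc i - a)^2) = M2 - a^2"
  proof -
    have "Mf u (\<lambda>i. (cc i - a)^2) = Mf u (\<lambda>i. a^2 + (-2*a) * cc i + 1 * (cc i)^2)"
      unfolding Mf_def by (intro sum.cong refl) (simp add: power2_diff algebra_simps)
    also have "\<dots> = M2 - a^2" unfolding Mf_poly S1 M2_def a_def by (simp add: power2_eq_square)
    finally show ?thesis .
  qed
  have VarX: "(gx - a)^2 * Px u \<le> M2 - a^2"
  proof -
    have "Mf u (\<lambda>i. hx i * (\<lambda>c. (c - a)^2) (cc i)) \<le> Mf u (\<lambda>i. (cc i - a)^2)"
      by (intro Mf_mono) (simp add: hx1 mult_left_le_one_le hx0)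
    thus ?thesis using blkx[of u "\<lambda>c. (c - a)^2"] unfolding Var by simp
  qed
  have VarY: "(gy - a)^2 * Py u \<le> M2 - a^2"
  proof -
    have "Mf u (\<lambda>i. hy i * (\<lambda>c. (c - a)^2) (cc i)) \<le> Mf u (\<lambda>i. (cc i - a)^2)"
      by (intro Mf_mono) (simp add: hy1 mult_left_le_one_le hy0)
    thus ?thesis using blky[of u "\<lambda>c. (c - a)^2"] unfolding Var by simp
  qed
  have Eq: "Mf u (\<lambda>i. 1 - (cc i)^2) = 1 - M2"
  proof -
    have "Mf u (\<lambda>i. 1 - (cc i)^2) = Mf u (\<lambda>i. 1 + 0 * cc i + (-1) * (cc i)^2)"
      unfolding Mf_def by (intro sum.cong refl) simp
    thus ?thesis unfolding Mf_poly S1 M2_def by simp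
  qed
  have EX: "(1 - gx^2) * Px u \<le> 1 - M2"
  proof -
    have "Mf u (\<lambda>i. hx i * (\<lambda>c. 1 - c^2) (cc i)) \<le> Mf u (\<lambda>i. 1 - (cc i)^2)"
      by (intro Mf_mono) (simp add: hx1 mult_left_le_one_le hx0 cc_bd)
    thus ?thesis using blkx[of u "\<lambda>c. 1 - c^2"] unfolding Eq by simp
  qed
  have EY: "(1 - gy^2) * Py u \<le> 1 - M2"
  proof -
    have "Mf u (\<lambda>i. hy i * (\<lambda>c. 1 - c^2) (cc i)) \<le> Mf u (\<lambda>i. 1 - (cc i)^2)"
      by (intro Mf_mono) (simp add: hy1 mult_left_le_one_le hy0 cc_bd)
    thus ?thesis using blky[of u "\<lambda>c. 1 - c^2"] unfolding Eq by simp
  qed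
  have D: "d * a^2 \<le> M2 - a^2"
  proof -
    have s: "px*(gx-a)^2 + py*(gy-a)^2 = px*gx^2 + py*gy^2 - 2*a*(px*gx+py*gy) + a^2*(px+py)"
      by (simp add: power2_diff algebra_simps)
    have s2: "px*(gx-a)^2 + py*(gy-a)^2 \<ge> a^2" unfolding s mean0 pxy using px0 py0 by simp
    have t1: "px * d * (gx-a)^2 \<le> px * Px u * (gx-a)^2" using dPx by (intro mult_right_mono) auto
    have t2: "py * d * (gy-a)^2 \<le> py * Py u * (gy-a)^2" using dPy by (intro mult_right_mono) auto
    have t3: "px * ((gx - a)^2 * Px u) \<le> px * (M2 - a^2)" using VarX px0 by (rule mult_left_mono)
    have t4: "py * ((gy - a)^2 * Py u) \<le> py * (M2 - a^2)" using VarY py0 by (rule mult_left_mono)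
    have "d * a^2 \<le> d * (px*(gx-a)^2 + py*(gy-a)^2)" using s2 d0 by (intro mult_left_mono) auto
    also have "\<dots> = px * d * (gx-a)^2 + py * d * (gy-a)^2" by (simp add: algebra_simps)
    also have "\<dots> \<le> px * ((gx - a)^2 * Px u) + py * ((gy - a)^2 * Py u)"
      using t1 t2 by (simp add: algebra_simps)
    also have "\<dots> \<le> (px + py) * (M2 - a^2)" using t3 t4 by (simp add: algebra_simps)
    finally show ?thesis using pxy by simp
  qed
  have E: "d * kp \<le> 1 - M2"
  proof -
    have t1: "px * d * (1 - gx^2) \<le> px * Px u * (1 - gx^2)" using dPx gx_bd by (intro mult_right_mono) auto
    have t2: "py * d * (1 - gy^2) \<le> py * Py u * (1 - gy^2)" using dPy gy_bd by (intro mult_right_mono) auto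
    have t3: "px * ((1 - gx^2) * Px u) \<le> px * (1 - M2)" using EX px0 by (rule mult_left_mono)
    have t4: "py * ((1 - gy^2) * Py u) \<le> py * (1 - M2)" using EY py0 by (rule mult_left_mono)
    have "d * kp = px * d * (1 - gx^2) + py * d * (1 - gy^2)" by (simp add: kp_def algebra_simps)
    also have "\<dots> \<le> px * ((1 - gx^2) * Px u) + py * ((1 - gy^2) * Py u)"
      using t1 t2 by (simp add: algebra_simps)
    also have "\<dots> \<le> (px + py) * (1 - M2)" using t3 t4 by (simp add: algebra_simps)
    finally show ?thesis using pxy by simp
  qed
  have a2: "a^2 < 1"
  proof -
    have "0 \<le> d * a^2" using d0 by simp
    moreover have "0 < d * kp" using d0 kp_pos by simp
    ultimately show ?thesis using D E by linarith
  qed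
  have aa: "\<bar>a\<bar> < 1" using a2 by (metis abs_square_less_1)
  have fpos: "\<And>g. g^2 \<le> 1 \<Longrightarrow> 1 + a^2 - 2*a*g > 0"
  proof -
    fix g :: real assume g: "g^2 \<le> 1"
    have e: "1 + a^2 - 2*a*g = (a-g)^2 + (1-g^2)" by (simp add: power2_diff algebra_simps)
    show "1 + a^2 - 2*a*g > 0"
    proof (cases "a = g")
      case True thus ?thesis using e a2 by simp
    next
      case False hence "(a-g)^2 > 0" by simp
      thus ?thesis using e g by linarith
    qed
  qed
  have pos: "0 < 1 - a^2" using a2 by simp
  have Ld: "dim_row L = n" using L by (auto simp: opm_def)
  define wt where "wt = L *\<^sub>v u - a \<cdot>\<^sub>v u"
  have Lc: "L \<in> carrier_mat n n" using L by (simp add: opm_def)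
  have wt: "wt \<in> carrier_vec n" unfolding wt_def
    by (rule minus_carrier_vec) (auto intro: mult_mat_vec_carrier[OF Lc u] simp: u)
  have fsum: "Mf u (\<lambda>i. 1 + a^2 - 2*a*cc i) = 1 - a^2"
  proof -
    have "Mf u (\<lambda>i. 1 + a^2 - 2*a*cc i) = Mf u (\<lambda>i. (1 + a^2) + (-2*a) * cc i + 0 * (cc i)^2)"
      unfolding Mf_def by (intro sum.cong refl) (simp add: algebra_simps)
    thus ?thesis unfolding Mf_poly S1 a_def[symmetric] by (simp add: power2_eq_square)
  qed
  have N: "Mf wt (\<lambda>_. 1) = 1 - a^2"
    unfolding wt_def using opm_M[OF L u, of "\<lambda>_. 1" a] fsum by simp
  have hsw: "hs L u = normalize_vec wt" unfolding hs_def wt_def a_def ..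
  have NEW: "\<And>h. (\<And>i. i < n \<Longrightarrow> h (pr i) = h i) \<Longrightarrow>
      Mf (hs L u) h = Mf u (\<lambda>i. h i * (1 + a^2 - 2*a*cc i)) / (1 - a^2)"
  proof -
    fix h :: "nat \<Rightarrow> real" assume h: "\<And>i. i < n \<Longrightarrow> h (pr i) = h i"
    show "Mf (hs L u) h = Mf u (\<lambda>i. h i * (1 + a^2 - 2*a*cc i)) / (1 - a^2)"
      unfolding hsw using Mf_normalize[OF wt, of h] N pos opm_M[OF L u, of h a, OF h]
      by (simp add: wt_def)
  qed
  have car: "hs L u \<in> carrier_vec n" unfolding hsw normalize_vec_def using wt by simp
  have S1': "Mf (hs L u) (\<lambda>_. 1) = 1" using NEW[of "\<lambda>_. 1"] fsum pos by simp
  define fx where "fx = 1 + a^2 - 2*a*gx"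
  define fy where "fy = 1 + a^2 - 2*a*gy"
  have fx: "fx > 0" unfolding fx_def using fpos gx_bd by simp
  have fy: "fy > 0" unfolding fy_def using fpos gy_bd by simp
  have Px': "Px (hs L u) = fx * Px u / (1 - a^2)"
    unfolding Px_def using NEW[of hx, OF hx_pr] blkx[of u "\<lambda>c. 1 + a^2 - 2*a*c"]
    by (simp add: fx_def Px_def)
  have Py': "Py (hs L u) = fy * Py u / (1 - a^2)"
    unfolding Py_def using NEW[of hy, OF hy_pr] blky[of u "\<lambda>c. 1 + a^2 - 2*a*c"]
    by (simp add: fy_def Py_def)
  have Pxp': "Px (hs L u) > 0" unfolding Px' using fx Pxp pos by simp
  have Pyp': "Py (hs L u) > 0" unfolding Py' using fy Pyp pos by simp
  have l1: "ln (Px (hs L u)) = ln fx + ln (Px u) - ln (1 - a^2)"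
    unfolding Px' using fx Pxp pos by (simp add: ln_div ln_mult)
  have l2: "ln (Py (hs L u)) = ln fy + ln (Py u) - ln (1 - a^2)"
    unfolding Py' using fy Pyp pos by (simp add: ln_div ln_mult)
  have lnsq: "ln (1 - a^2) = ln (1 - a) + ln (1 + a)"
  proof -
    have "1 - a^2 = (1 - a) * (1 + a)" by (simp add: power2_eq_square algebra_simps)
    moreover have p: "0 < 1 - a" "0 < 1 + a" using aa by (auto simp: abs_less_iff)
    ultimately show ?thesis by (simp add: ln_mult)
  qed
  have bx: "(1 + gx) * ln (1 - a) + (1 - gx) * ln (1 + a) \<le> ln fx"
    unfolding fx_def using aa sq_bd[of gx] gx_bd by (intro ln_f_bound) auto
  have by': "(1 + gy) * ln (1 - a) + (1 - gy) * ln (1 + a) \<le> ln fy"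
    unfolding fy_def using aa sq_bd[of gy] gy_bd by (intro ln_f_bound) auto
  have comb: "px*((1 + gx) * ln (1 - a) + (1 - gx) * ln (1 + a)) + py*((1 + gy) * ln (1 - a) + (1 - gy) * ln (1 + a))
      = (px+py)*(ln (1-a) + ln (1+a)) + (px*gx+py*gy)*(ln (1-a) - ln (1+a))"
    by (simp add: algebra_simps)
  have "px * ln fx + py * ln fy \<ge> ln (1 - a^2)"
  proof -
    have "px*((1 + gx) * ln (1 - a) + (1 - gx) * ln (1 + a)) \<le> px * ln fx" using bx px0 by (rule mult_left_mono)
    moreover have "py*((1 + gy) * ln (1 - a) + (1 - gy) * ln (1 + a)) \<le> py * ln fy" using by' py0 by (rule mult_left_mono)
    ultimately show ?thesis using comb mean0 pxy lnsq by simp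
  qed
  moreover have "px * ln (1 - a^2) + py * ln (1 - a^2) = ln (1 - a^2)"
  proof -
    have "(px + py) * ln (1 - a^2) = ln (1 - a^2)" using pxy by simp
    thus ?thesis by (simp add: distrib_right)
  qed
  moreover have "Phi (hs L u) = Phi u + (px * ln fx + py * ln fy) - (px * ln (1 - a^2) + py * ln (1 - a^2))"
    unfolding Phi_def l1 l2 by (simp add: algebra_simps)
  ultimately have Phi': "Phi u \<le> Phi (hs L u)" by linarith
  have Inv': "Inv \<Phi>0 (hs L u)" unfolding Inv_def using car S1' Pxp' Pyp' Phi' PhiI by simp
  have mean': "Mf (hs L u) cc = (a*(1+a^2) - 2*a*M2)/(1-a^2)"
  proof -
    have "Mf u (\<lambda>i. cc i * (1 + a^2 - 2*a*cc i)) = Mf u (\<lambda>i. 0 + (1 + a^2) * cc i + (-2*a) * (cc i)^2)"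
      unfolding Mf_def by (intro sum.cong refl) (simp add: power2_eq_square algebra_simps)
    also have "\<dots> = a*(1+a^2) - 2*a*M2" unfolding Mf_poly a_def M2_def by (simp add: algebra_simps)
    finally show ?thesis using NEW[of cc, OF cc_pr] by simp
  qed
  have "\<bar>Mf (hs L u) cc\<bar> \<le> \<bar>a\<bar> * (1 - 2*d*min 1 kp * a^2)"
    unfolding mean' using RL1[OF D E _ kp_pos a2] d0 by simp
  thus ?thesis using Inv' unfolding a_def d_def eta_def by (simp add: algebra_simps)
qed

end



context dyn begin

lemma hs_carrier: assumes L: "opm L \<tau>" and u: "u \<in> carrier_vec n" shows "hs L u \<in> carrier_vec n"
proof -
  have Lc: "L \<in> carrier_mat n n" using L by (simp add: opm_def)
  have "L *\<^sub>v u - Mf u cc \<cdot>\<^sub>v u \<in> carrier_vec n"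
    by (rule minus_carrier_vec) (auto intro: mult_mat_vec_carrier[OF Lc u] simp: u)
  thus ?thesis unfolding hs_def normalize_vec_def by simp
qed

lemma converge:
  assumes LA: "opm A \<tau>" and LT: "opm (transpose_mat A) \<tau>'" and I0: "Inv (Phi v0) v0"
  shows "aci_alpha_seq A v0 \<longlonglongrightarrow> 0 \<and> aci_beta_seq A v0 \<longlonglongrightarrow> 0"
proof -
  define \<Phi>0 where "\<Phi>0 = Phi v0"
  define v where "v k = aci_v A v0 k" for k
  have nxt: "aci_next A u = hs (transpose_mat A) (hs A u)" if u: "u \<in> carrier_vec n" for u
  proof -
    have w: "aci_w A u = hs A u" unfolding aci_w_def hs_def aci_alpha_def opm_alpha[OF LA u] ..
    have wc: "hs A u \<in> carrier_vec n" by (rule hs_carrier[OF LA u])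
    have b: "aci_beta A (hs A u) = Mf (hs A u) cc" unfolding aci_beta_def by (rule opm_alpha[OF LA wc])
    show ?thesis unfolding aci_next_def Let_def w b by (simp only: hs_def[of "transpose_mat A" "hs A u"])
  qed
  have v0: "v 0 = v0" unfolding v_def aci_v_def by simp
  have vS: "v (Suc k) = aci_next A (v k)" for k unfolding v_def aci_v_def by simp
  have inv: "Inv \<Phi>0 (v k)" for k
  proof (induction k)
    case 0 thus ?case using I0 v0 \<Phi>0_def by simp
  next
    case (Suc k)
    have c: "v k \<in> carrier_vec n" using Suc by (simp add: Inv_def)
    have "Inv \<Phi>0 (hs A (v k))" using half_step[OF LA Suc] by simp
    hence "Inv \<Phi>0 (hs (transpose_mat A) (hs A (v k)))" using half_step[OF LT] by simp
    thus ?case unfolding vS nxt[OF c] .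
  qed
  have car: "v k \<in> carrier_vec n" for k using inv[of k] by (simp add: Inv_def)
  have al: "aci_alpha_seq A v0 k = Mf (v k) cc" for k
    unfolding aci_alpha_seq_def aci_alpha_def v_def[symmetric] using opm_alpha[OF LA car] .
  have be: "aci_beta_seq A v0 k = Mf (hs A (v k)) cc" for k
  proof -
    have w: "aci_w A (v k) = hs A (v k)" unfolding aci_w_def hs_def aci_alpha_def opm_alpha[OF LA car] ..
    show ?thesis unfolding aci_beta_seq_def v_def[symmetric] w aci_beta_def
      using opm_alpha[OF LA hs_carrier[OF LA car]] .
  qed
  define x where "x k = \<bar>Mf (v k) cc\<bar>" for k
  define e where "e = eta \<Phi>0"
  have e: "e > 0" unfolding e_def by (rule eta_pos)
  have hb: "\<bar>Mf (hs A (v k)) cc\<bar> \<le> x k * (1 - e * (x k)^2)" for k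
    using half_step[OF LA inv[of k]] unfolding x_def e_def by simp
  have hb2: "\<bar>Mf (v (Suc k)) cc\<bar> \<le> \<bar>Mf (hs A (v k)) cc\<bar>" for k
  proof -
    have "\<bar>Mf (v (Suc k)) cc\<bar> \<le> \<bar>Mf (hs A (v k)) cc\<bar> * (1 - e * (Mf (hs A (v k)) cc)^2)"
      using half_step[OF LT, of \<Phi>0 "hs A (v k)"] half_step[OF LA inv[of k]]
      unfolding vS nxt[OF car] e_def by simp
    also have "\<dots> \<le> \<bar>Mf (hs A (v k)) cc\<bar>" using e by (simp add: mult_left_le)
    finally show ?thesis .
  qed
  have xm: "x k * (1 - e * (x k)^2) \<le> x k" for k using e unfolding x_def by (simp add: mult_left_le)
  have "x \<longlonglongrightarrow> 0"
  proof (rule decay_to_zero[OF _ _ e])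
    show "0 \<le> x k" for k unfolding x_def by simp
    show "x (Suc k) \<le> x k * (1 - e * (x k)^2)" for k using hb[of k] hb2[of k] unfolding x_def by linarith
  qed
  hence A0: "aci_alpha_seq A v0 \<longlonglongrightarrow> 0"
    using tendsto_rabs_zero_iff[of "aci_alpha_seq A v0" sequentially] unfolding x_def al[abs_def] by simp
  have "(\<lambda>k. \<bar>aci_beta_seq A v0 k\<bar>) \<longlonglongrightarrow> 0"
  proof (rule tendsto_sandwich[of "\<lambda>_. 0" _ _ x])
    show "\<forall>\<^sub>F k in sequentially. 0 \<le> \<bar>aci_beta_seq A v0 k\<bar>" by simp
    show "\<forall>\<^sub>F k in sequentially. \<bar>aci_beta_seq A v0 k\<bar> \<le> x k"
      unfolding be by (intro always_eventually allI order_trans[OF hb xm])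
  qed (use \<open>x \<longlonglongrightarrow> 0\<close> in auto)
  hence "aci_beta_seq A v0 \<longlonglongrightarrow> 0" by (simp add: tendsto_rabs_zero_iff)
  with A0 show ?thesis by simp
qed

end



definition cpr :: "nat \<Rightarrow> bool \<Rightarrow> bool \<Rightarrow> nat \<Rightarrow> nat" where
  "cpr m p0 p1 i = (if p0 \<and> i = 0 then i else if p1 \<and> i = aci_dim m p0 p1 - 1 then i
     else if even (i - blk_off p0) then i + 1 else i - 1)"

definition cbk :: "nat \<Rightarrow> bool \<Rightarrow> bool \<Rightarrow> nat \<Rightarrow> nat" where
  "cbk m p0 p1 i = (if p0 \<and> i = 0 then 0 else if p1 \<and> i = aci_dim m p0 p1 - 1 then m + 1
     else (i - blk_off p0) div 2 + 1)"

definition csg :: "nat \<Rightarrow> bool \<Rightarrow> bool \<Rightarrow> (nat \<Rightarrow> real) \<Rightarrow> nat \<Rightarrow> real" where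
  "csg m p0 p1 s i = (if p0 \<and> i = 0 then 0 else if p1 \<and> i = aci_dim m p0 p1 - 1 then 0
     else if even (i - blk_off p0) then s (cbk m p0 p1 i) else - s (cbk m p0 p1 i))"

lemma nat_par: fixes d :: nat obtains q where "d = 2*q" "even d" | q where "d = 2*q + 1" "odd d"
proof -
  have "d = 2*(d div 2) + d mod 2" by simp
  moreover have "d mod 2 = 0 \<or> d mod 2 = 1" by arith
  ultimately show ?thesis using that by (metis add.right_neutral dvd_triv_left even_add odd_one)
qed

lemma pairarith:
  fixes off i m :: nat
  assumes hi: "off \<le> i" "i < off + 2*m"
  defines "X \<equiv> (if even (i - off) then i + 1 else i - 1)"
  shows "off \<le> X" "X < off + 2*m"
    "(if even (X - off) then X + 1 else X - 1) = i"
    "(X - off) div 2 = (i - off) div 2"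
    "even (X - off) \<longleftrightarrow> \<not> even (i - off)"
    "X \<noteq> i"
    "i < X \<longleftrightarrow> even (i - off)"
    "\<And>k. (off \<le> k \<and> k < off + 2 * m \<and> (i - off) div 2 = (k - off) div 2 \<and> k \<noteq> i) \<longleftrightarrow> k = X"
proof -
  obtain d where d: "i = off + d" using hi(1) le_Suc_ex by blast
  have dm: "d < 2*m" using hi d by simp
  have id: "i - off = d" using d by simp
  have all: "(off \<le> X \<and> X < off + 2*m \<and> (if even (X - off) then X + 1 else X - 1) = i
    \<and> (X - off) div 2 = (i - off) div 2 \<and> (even (X - off) \<longleftrightarrow> \<not> even (i - off)) \<and> X \<noteq> i
    \<and> (i < X \<longleftrightarrow> even (i - off)))
    \<and> (\<forall>k. (off \<le> k \<and> k < off + 2 * m \<and> (i - off) div 2 = (k - off) div 2 \<and> k \<noteq> i) \<longleftrightarrow> k = X)"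
  proof (cases d rule: nat_par)
    case (1 q)
    have X: "X = off + 2*q + 1" unfolding X_def id using 1 d by simp
    have qm: "q < m" using dm 1 by simp
    have kk: "\<And>k. (off \<le> k \<and> k < off + 2 * m \<and> q = (k - off) div 2 \<and> k \<noteq> off + 2*q) \<longleftrightarrow> k = off + 2*q + 1"
    proof
      fix k assume a: "off \<le> k \<and> k < off + 2 * m \<and> q = (k - off) div 2 \<and> k \<noteq> off + 2*q"
      then obtain e where e: "k = off + e" using le_Suc_ex by blast
      show "k = off + 2*q + 1" using a e by (cases e rule: nat_par) auto
    next
      fix k assume "k = off + 2*q + 1" thus "off \<le> k \<and> k < off + 2 * m \<and> q = (k - off) div 2 \<and> k \<noteq> off + 2*q"
        using qm by simp
    qed
    show ?thesis unfolding X id using 1 d qm kk by simp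
  next
    case (2 q)
    have X: "X = off + 2*q" unfolding X_def id using 2 d by simp
    have qm: "q < m" using dm 2 by simp
    have kk: "\<And>k. (off \<le> k \<and> k < off + 2 * m \<and> q = (k - off) div 2 \<and> k \<noteq> off + 2*q + 1) \<longleftrightarrow> k = off + 2*q"
    proof
      fix k assume a: "off \<le> k \<and> k < off + 2 * m \<and> q = (k - off) div 2 \<and> k \<noteq> off + 2*q + 1"
      then obtain e where e: "k = off + e" using le_Suc_ex by blast
      show "k = off + 2*q" using a e by (cases e rule: nat_par) auto
    next
      fix k assume "k = off + 2*q" thus "off \<le> k \<and> k < off + 2 * m \<and> q = (k - off) div 2 \<and> k \<noteq> off + 2*q + 1"
        using qm by simp
    qed
    show ?thesis unfolding X id using 2 d qm kk by simp
  qed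
  thus "off \<le> X" "X < off + 2*m"
    "(if even (X - off) then X + 1 else X - 1) = i"
    "(X - off) div 2 = (i - off) div 2"
    "even (X - off) \<longleftrightarrow> \<not> even (i - off)"
    "X \<noteq> i"
    "i < X \<longleftrightarrow> even (i - off)"
    "\<And>k. (off \<le> k \<and> k < off + 2 * m \<and> (i - off) div 2 = (k - off) div 2 \<and> k \<noteq> i) \<longleftrightarrow> k = X"
    by blast+
qed

lemma if3_1: "P \<Longrightarrow> (if P then x else if Q then y else z) = x" by simp
lemma if3_2: "\<not>P \<Longrightarrow> Q \<Longrightarrow> (if P then x else if Q then y else z) = y" by simp
lemma if3_3: "\<not>P \<Longrightarrow> \<not>Q \<Longrightarrow> (if P then x else if Q then y else z) = z" by simp
lemma if3_4: "P \<or> Q \<Longrightarrow> (if P then x else if Q then x else z) = x" by auto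
lemma if3_5: "P \<or> Q \<Longrightarrow> (if P then x else if Q then y else z) \<in> {x, y}" by auto

lemma mid_iff:
  assumes "m \<ge> 1" "i < aci_dim m p0 p1"
  shows "(\<not>(p0 \<and> i = 0) \<and> \<not>(p1 \<and> i = aci_dim m p0 p1 - 1)) \<longleftrightarrow> (blk_off p0 \<le> i \<and> i < blk_off p0 + 2*m)"
  using assms by (cases p0; cases p1) (auto simp: aci_dim_def blk_off_def)

lemma dim_ge: "m \<ge> 1 \<Longrightarrow> aci_dim m p0 p1 \<ge> 2" by (simp add: aci_dim_def)

lemma pr_facts:
  assumes m: "m \<ge> 1" and i: "i < aci_dim m p0 p1"
  shows "cpr m p0 p1 i < aci_dim m p0 p1 \<and> cpr m p0 p1 (cpr m p0 p1 i) = i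
    \<and> cbk m p0 p1 (cpr m p0 p1 i) = cbk m p0 p1 i
    \<and> csg m p0 p1 s (cpr m p0 p1 i) = - csg m p0 p1 s i"
proof (cases "(p0 \<and> i = 0) \<or> (p1 \<and> i = aci_dim m p0 p1 - 1)")
  case True
  have "cpr m p0 p1 i = i" unfolding cpr_def by (rule if3_4[OF True])
  moreover have "csg m p0 p1 s i = 0" unfolding csg_def by (rule if3_4[OF True])
  ultimately show ?thesis using i by simp
next
  case False
  define off where "off = blk_off p0"
  define n where "n = aci_dim m p0 p1"
  have hi: "off \<le> i" "i < off + 2*m" unfolding off_def using mid_iff[OF m i] False by blast+
  have ci: "cpr m p0 p1 i = (if even (i - off) then i + 1 else i - 1)"
    unfolding cpr_def off_def by (rule if3_3) (use False in auto)
  have cm: "off \<le> cpr m p0 p1 i \<and> cpr m p0 p1 i < off + 2*m" unfolding ci using pairarith(1,2)[OF hi] by blast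
  have nlt: "off + 2*m \<le> n" unfolding n_def off_def aci_dim_def by simp
  have clt: "cpr m p0 p1 i < n" using cm nlt by linarith
  have "\<not>(p0 \<and> cpr m p0 p1 i = 0) \<and> \<not>(p1 \<and> cpr m p0 p1 i = aci_dim m p0 p1 - 1)"
    using mid_iff[OF m clt[unfolded n_def]] cm unfolding off_def by blast
  hence F2: "\<not>((p0 \<and> cpr m p0 p1 i = 0) \<or> (p1 \<and> cpr m p0 p1 i = n - 1))"
    unfolding n_def by blast
  have cc: "cpr m p0 p1 (cpr m p0 p1 i) = (if even (cpr m p0 p1 i - off) then cpr m p0 p1 i + 1 else cpr m p0 p1 i - 1)"
    unfolding cpr_def[of m p0 p1 "cpr m p0 p1 i"] off_def by (rule if3_3) (use F2[unfolded n_def] in blast)+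
  have bi: "cbk m p0 p1 i = (i - off) div 2 + 1" unfolding cbk_def off_def by (rule if3_3) (use False in auto)
  have bc: "cbk m p0 p1 (cpr m p0 p1 i) = (cpr m p0 p1 i - off) div 2 + 1" unfolding cbk_def[of m p0 p1 "cpr m p0 p1 i"] off_def by (rule if3_3) (use F2[unfolded n_def] in blast)+
  have si: "csg m p0 p1 s i = (if even (i - off) then s (cbk m p0 p1 i) else - s (cbk m p0 p1 i))"
    unfolding csg_def off_def by (rule if3_3) (use False in auto)
  have sc: "csg m p0 p1 s (cpr m p0 p1 i) = (if even (cpr m p0 p1 i - off) then s (cbk m p0 p1 (cpr m p0 p1 i)) else - s (cbk m p0 p1 (cpr m p0 p1 i)))"
    unfolding csg_def[of m p0 p1 s "cpr m p0 p1 i"] off_def by (rule if3_3) (use F2[unfolded n_def] in blast)+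
  have e1: "cpr m p0 p1 (cpr m p0 p1 i) = i" unfolding cc unfolding ci by (rule pairarith(3)[OF hi])
  have e2: "cbk m p0 p1 (cpr m p0 p1 i) = cbk m p0 p1 i" unfolding bc bi unfolding ci using pairarith(4)[OF hi] by simp
  have par: "even (cpr m p0 p1 i - off) \<longleftrightarrow> \<not> even (i - off)" unfolding ci by (rule pairarith(5)[OF hi])
  have e3: "csg m p0 p1 s (cpr m p0 p1 i) = - csg m p0 p1 s i" unfolding sc si e2 using par by auto
  show ?thesis using clt e1 e2 e3 n_def by simp
qed

lemma cbk_range:
  assumes m: "m \<ge> 1" and i: "i < aci_dim m p0 p1"
  shows "cbk m p0 p1 i \<le> m + 1
    \<and> (\<not>((p0 \<and> i = 0) \<or> (p1 \<and> i = aci_dim m p0 p1 - 1)) \<longrightarrow> 1 \<le> cbk m p0 p1 i \<and> cbk m p0 p1 i \<le> m)"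
proof (cases "(p0 \<and> i = 0) \<or> (p1 \<and> i = aci_dim m p0 p1 - 1)")
  case True
  have "cbk m p0 p1 i \<in> {0, m+1}" unfolding cbk_def by (rule if3_5[OF True])
  thus ?thesis using True by auto
next
  case False
  have hi: "blk_off p0 \<le> i" "i < blk_off p0 + 2*m" using mid_iff[OF m i] False by blast+
  have "cbk m p0 p1 i = (i - blk_off p0) div 2 + 1" unfolding cbk_def by (rule if3_3) (use False in auto)
  thus ?thesis using hi False by auto
qed

lemma entry:
  assumes m: "m \<ge> 1" and i: "i < aci_dim m p0 p1" and k: "k < aci_dim m p0 p1"
    and c0: "c 0 = -1" and c1: "c (m + 1) = 1"
  shows "aci_mat m p0 p1 c s $$ (i, k) = (if k = i then c (cbk m p0 p1 i)
            else if k = cpr m p0 p1 i then csg m p0 p1 s i else 0)"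
proof -
  define off where "off = blk_off p0"
  define n where "n = aci_dim m p0 p1"
  have n2: "n \<ge> 2" using dim_ge[OF m] n_def by simp
  have nlt: "off + 2*m \<le> n" unfolding n_def off_def aci_dim_def by simp
  define R where "R = (off \<le> i \<and> i < off + 2 * m \<and> off \<le> k \<and> k < off + 2 * m
                \<and> (i - off) div 2 = (k - off) div 2)"
  define V where "V = (if i = k then c ((i - off) div 2 + 1) else if i < k then s ((i - off) div 2 + 1) else - s ((i - off) div 2 + 1))"
  have E: "aci_mat m p0 p1 c s $$ (i, k) =
        (if p0 \<and> i = 0 \<and> k = 0 then -1
        else if p1 \<and> i = n - 1 \<and> k = n - 1 then 1
        else if R then V else 0)"
    using i k unfolding aci_mat_def Let_def n_def off_def R_def V_def by simp
  show ?thesis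
  proof (cases "p0 \<and> i = 0")
    case True
    have o: "off = 1" using True by (simp add: off_def blk_off_def)
    have nR: "\<not> R" unfolding R_def using True o by simp
    have n1: "\<not> (p1 \<and> i = n - 1 \<and> k = n - 1)" using True n2 by simp
    have v: "aci_mat m p0 p1 c s $$ (i, k) = (if k = i then -1 else 0)"
    proof (cases "k = i")
      case True2: True
      show ?thesis unfolding E using True True2 by simp
    next
      case False
      show ?thesis unfolding E using True False nR n1 by simp
    qed
    have cb: "cbk m p0 p1 i = 0" unfolding cbk_def by (rule if3_1[OF True])
    have cp: "cpr m p0 p1 i = i" unfolding cpr_def by (rule if3_1[OF True])
    show ?thesis unfolding v cb cp using c0 by simp
  next
    case F0: False
    show ?thesis
    proof (cases "p1 \<and> i = n - 1")
      case True
      have ni: "\<not> (i < off + 2*m)" using True nlt unfolding n_def off_def aci_dim_def by auto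
      have nR: "\<not> R" unfolding R_def using ni by simp
      have n0: "\<not> (p0 \<and> i = 0 \<and> k = 0)" using F0 by simp
      have v: "aci_mat m p0 p1 c s $$ (i, k) = (if k = i then 1 else 0)"
      proof (cases "k = i")
        case True2: True
        show ?thesis unfolding E using True True2 n0 by simp
      next
        case False
        show ?thesis unfolding E using False nR n0 by simp
      qed
      have cb: "cbk m p0 p1 i = m + 1" unfolding cbk_def by (rule if3_2) (use True F0 n_def in blast)+
      have cp: "cpr m p0 p1 i = i" unfolding cpr_def by (rule if3_2) (use True F0 n_def in blast)+
      show ?thesis unfolding v cb cp using c1 by simp
    next
      case F1: False
      have hi: "off \<le> i" "i < off + 2*m" unfolding off_def using mid_iff[OF m i] F0 F1[unfolded n_def] by blast+
      have E2: "aci_mat m p0 p1 c s $$ (i, k) = (if R then V else 0)"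
        unfolding E by (rule if3_3) (use F0 F1 in blast)+
      have ci: "cpr m p0 p1 i = (if even (i - off) then i + 1 else i - 1)"
        unfolding cpr_def off_def by (rule if3_3) (use F0 F1 n_def in blast)+
      have bi: "cbk m p0 p1 i = (i - off) div 2 + 1"
        unfolding cbk_def off_def by (rule if3_3) (use F0 F1 n_def in blast)+
      have si: "csg m p0 p1 s i = (if even (i - off) then s (cbk m p0 p1 i) else - s (cbk m p0 p1 i))"
        unfolding csg_def off_def by (rule if3_3) (use F0 F1 n_def in blast)+
      have key: "(off \<le> k \<and> k < off + 2 * m \<and> (i - off) div 2 = (k - off) div 2 \<and> k \<noteq> i)
                 \<longleftrightarrow> k = (if even (i - off) then i + 1 else i - 1)" by (rule pairarith(8)[OF hi])
      have lt: "i < (if even (i - off) then i + 1 else i - 1) \<longleftrightarrow> even (i - off)" by (rule pairarith(7)[OF hi])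
      show ?thesis
      proof (cases "k = i")
        case True
        have "R" unfolding R_def using hi True by simp
        moreover have "V = c ((i - off) div 2 + 1)" unfolding V_def using True by simp
        ultimately show ?thesis unfolding E2 bi using True by simp
      next
        case kne: False
        show ?thesis
        proof (cases "k = cpr m p0 p1 i")
          case True
          hence kk: "k = (if even (i - off) then i + 1 else i - 1)" using ci by simp
          have "R" unfolding R_def using key kk kne hi by blast
          moreover have "V = csg m p0 p1 s i"
          proof -
            have "i < k \<longleftrightarrow> even (i - off)" using lt kk by simp
            thus ?thesis unfolding V_def si bi using kne by simp
          qed
          ultimately show ?thesis unfolding E2 using kne True by simp
        next
          case False
          hence "\<not> R" unfolding R_def using key kne ci by auto
          thus ?thesis unfolding E2 using kne False by simp
        qed
      qed
    qed
  qed
qed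




lemma idx_ok:
  assumes m: "m \<ge> 1" and pz: "blk_present m p0 p1 z" and iz: "i \<in> blk_idx m p0 p1 z"
  shows "i < aci_dim m p0 p1 \<and> cbk m p0 p1 i = z"
proof -
  have n2: "aci_dim m p0 p1 \<ge> 2" by (rule dim_ge[OF m])
  show ?thesis
  proof (cases "z = 0")
    case True
    hence p: "p0" "i = 0" using pz iz by (auto simp: blk_present_def blk_idx_def)
    have "cbk m p0 p1 i = 0" unfolding cbk_def by (rule if3_1) (use p in auto)
    thus ?thesis using n2 p True by simp
  next
    case z0: False
    show ?thesis
    proof (cases "z = m + 1")
      case True
      hence p: "p1" "i = aci_dim m p0 p1 - 1" using pz iz z0 by (auto simp: blk_present_def blk_idx_def)
      have "cbk m p0 p1 i = m + 1" unfolding cbk_def by (rule if3_2) (use p n2 in auto)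
      thus ?thesis using n2 p True by simp
    next
      case False
      have zr: "1 \<le> z" "z \<le> m" using pz z0 False by (auto simp: blk_present_def)
      have iv: "i = blk_off p0 + 2 * (z - 1) \<or> i = blk_off p0 + 2 * (z - 1) + 1"
        using iz z0 False by (auto simp: blk_idx_def)
      have hi: "blk_off p0 \<le> i" "i < blk_off p0 + 2*m" using iv zr by auto
      have il: "i < aci_dim m p0 p1" using hi by (simp add: aci_dim_def)
      have ns: "\<not>(p0 \<and> i = 0) \<and> \<not>(p1 \<and> i = aci_dim m p0 p1 - 1)" using mid_iff[OF m il] hi by blast
      have "cbk m p0 p1 i = (i - blk_off p0) div 2 + 1" unfolding cbk_def by (rule if3_3) (use ns in auto)
      also have "\<dots> = z" using iv zr by auto
      finally show ?thesis using il by simp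
    qed
  qed
qed

lemma pi_facts:
  fixes a b :: real
  assumes ab: "a * b \<le> 0" and a: "a^2 < 1" and b: "b^2 \<le> 1"
  defines "px \<equiv> (if \<bar>a\<bar> + \<bar>b\<bar> > 0 then \<bar>b\<bar> / (\<bar>a\<bar> + \<bar>b\<bar>) else 1/2)"
  shows "0 \<le> px \<and> 0 \<le> 1 - px \<and> px*a + (1-px)*b = 0 \<and> 0 < px*(1-a^2) + (1-px)*(1-b^2)"
proof (cases "\<bar>a\<bar> + \<bar>b\<bar> > 0")
  case False
  hence "a = 0" "b = 0" by auto
  thus ?thesis unfolding px_def by simp
next
  case True
  define S where "S = \<bar>a\<bar> + \<bar>b\<bar>"
  have S: "S > 0" using True S_def by simp
  have p: "px = \<bar>b\<bar> / S" unfolding px_def S_def using True by simp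
  have q: "1 - px = \<bar>a\<bar> / S" unfolding p S_def using True by (simp add: field_simps)
  have z: "\<bar>b\<bar> * a + \<bar>a\<bar> * b = 0"
    using ab by (auto simp: mult_le_0_iff abs_if)
  have m: "px*a + (1-px)*b = 0" unfolding q unfolding p using z S by (simp add: field_simps)
  have a1: "0 < 1 - a^2" using a by simp
  have b1: "0 \<le> 1 - b^2" using b by simp
  have k: "0 < px*(1-a^2) + (1-px)*(1-b^2)"
  proof (cases "b = 0")
    case True
    hence "1 - px = 1" using q S S_def by simp
    thus ?thesis using True p a1 by simp
  next
    case False
    hence "px > 0" unfolding p using S by simp
    hence "px * (1 - a^2) > 0" using a1 by simp
    moreover have "(1-px)*(1-b^2) \<ge> 0" unfolding q using S b1 by simp
    ultimately show ?thesis by linarith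
  qed
  show ?thesis using m k S unfolding q unfolding p by simp
qed

theorem lemma4p9:
  fixes m :: nat and p0 p1 :: bool and c s :: "nat \<Rightarrow> real" and v0 :: "real vec"
  assumes "m \<ge> 1"
    and "\<And>j. 1 \<le> j \<Longrightarrow> j \<le> m \<Longrightarrow> (c j)\<^sup>2 + (s j)\<^sup>2 = 1"
    and "\<And>j. 1 \<le> j \<Longrightarrow> j \<le> m \<Longrightarrow> s j \<noteq> 0"
    and "c 0 = -1" and "c (m + 1) = 1"
    and "strict_mono_on {0..m+1} c"
    and "v0 \<in> carrier_vec (aci_dim m p0 p1)"
    and "vnorm v0 = 1"
    and "grade (aci_mat m p0 p1 c s) v0 \<ge> 2"
    and "1 \<le> l" and "l \<le> m" and "blk_nonzero m p0 p1 v0 l"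
    and "blk_present m p0 p1 j" and "blk_nonzero m p0 p1 v0 j" and "c l * c j \<le> 0"
  shows "aci_alpha_seq (aci_mat m p0 p1 c s) v0 \<longlonglongrightarrow> 0
       \<and> aci_beta_seq (aci_mat m p0 p1 c s) v0 \<longlonglongrightarrow> 0"
proof -
  note m = assms(1)
  define n where "n = aci_dim m p0 p1"
  define A where "A = aci_mat m p0 p1 c s"
  define pr where "pr = cpr m p0 p1"
  define bk where "bk = cbk m p0 p1"
  define cc where "cc = (\<lambda>i. c (bk i))"
  define sg where "sg = csg m p0 p1 s"
  have PF: "pr i < n" "pr (pr i) = i" "bk (pr i) = bk i" "sg (pr i) = - sg i" if "i < n" for i
    using pr_facts[OF m, of i p0 p1 s] that unfolding n_def pr_def bk_def sg_def by auto
  interpret B: bs n pr cc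
    by unfold_locales (simp_all add: PF cc_def)
  have ENT: "A $$ (i,k) = (if k = i then cc i else if k = pr i then sg i else 0)" if "i < n" "k < n" for i k
    using entry[OF m _ _ assms(4,5), of i p0 p1 k s] that unfolding A_def n_def cc_def pr_def sg_def bk_def by simp
  have NRM: "(cc i)^2 + (sg i)^2 = 1" if i: "i < n" for i
  proof (cases "p0 \<and> i = 0")
    case True
    have "bk i = 0" unfolding bk_def cbk_def by (rule if3_1[OF True])
    moreover have "sg i = 0" unfolding sg_def csg_def by (rule if3_1[OF True])
    ultimately show ?thesis using assms(4) by (simp add: cc_def)
  next
    case F0: False
    show ?thesis
    proof (cases "p1 \<and> i = n - 1")
      case True
      have "bk i = m + 1" unfolding bk_def cbk_def by (rule if3_2) (use F0 True n_def in auto)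
      moreover have "sg i = 0" unfolding sg_def csg_def by (rule if3_2) (use F0 True n_def in auto)
      ultimately show ?thesis using assms(5) by (simp add: cc_def)
    next
      case F1: False
      have r: "1 \<le> bk i" "bk i \<le> m" using cbk_range[OF m, of i p0 p1] i F0 F1 unfolding n_def bk_def by auto
      have "sg i = (if even (i - blk_off p0) then s (bk i) else - s (bk i))"
        unfolding sg_def csg_def bk_def by (rule if3_3) (use F0 F1 n_def in auto)
      hence "(sg i)^2 = (s (bk i))^2" by simp
      thus ?thesis using assms(2)[OF r] by (simp add: cc_def)
    qed
  qed
  have Ac: "A \<in> carrier_mat n n" unfolding A_def aci_mat_def n_def Let_def by simp
  have LA: "B.opm A sg" unfolding B.opm_def using Ac ENT PF NRM by auto
  have LT: "B.opm (transpose_mat A) (\<lambda>i. - sg i)"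
    unfolding B.opm_def
  proof (intro conjI allI impI)
    show "transpose_mat A \<in> carrier_mat n n" using Ac by simp
  next
    fix i k assume i: "i < n" and k: "k < n"
    have "transpose_mat A $$ (i, k) = A $$ (k, i)" using Ac i k by simp
    also have "\<dots> = (if i = k then cc k else if i = pr k then sg k else 0)" using ENT[OF k i] .
    also have "\<dots> = (if k = i then cc i else if k = pr i then - sg i else 0)"
    proof (cases "k = i")
      case False
      have "i = pr k \<longleftrightarrow> k = pr i" using PF i k by metis
      thus ?thesis using False PF(4)[OF i] by auto
    qed simp
    finally show "transpose_mat A $$ (i, k) = (if k = i then cc i else if k = pr i then - sg i else 0)" .
  next
    fix i assume "i < n" thus "- sg (pr i) = - (- sg i)" using PF by simp
  next
    fix i assume "i < n" thus "(cc i)^2 + (- sg i)^2 = 1" using NRM by simp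
  qed
  have jr: "j \<le> m + 1" using assms(13) by (simp add: blk_present_def)
  have cl: "c 0 < c l" "c l < c (m+1)"
    using strict_mono_onD[OF assms(6)] assms(10,11) by auto
  have gx: "(c l)^2 < 1" using cl assms(4,5) by (simp add: abs_square_less_1 abs_less_iff)
  have cj: "c 0 \<le> c j" "c j \<le> c (m+1)" using strict_mono_on_leD[OF assms(6)] jr by auto
  have gy: "(c j)^2 \<le> 1" using cj assms(4,5) by (simp add: abs_square_le_1 abs_le_iff)
  have ccb: "(cc i)^2 \<le> 1" if "i < n" for i
  proof -
    have "bk i \<le> m + 1" using cbk_range[OF m, of i p0 p1] that unfolding n_def bk_def by auto
    hence "c 0 \<le> c (bk i)" "c (bk i) \<le> c (m+1)" using strict_mono_on_leD[OF assms(6)] by auto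
    thus ?thesis using assms(4,5) by (simp add: cc_def abs_square_le_1 abs_le_iff)
  qed
  define px where "px = (if \<bar>c l\<bar> + \<bar>c j\<bar> > 0 then \<bar>c j\<bar> / (\<bar>c l\<bar> + \<bar>c j\<bar>) else 1/2)"
  have PI: "0 \<le> px \<and> 0 \<le> 1 - px \<and> px * c l + (1-px) * c j = 0 \<and> 0 < px*(1-(c l)^2) + (1-px)*(1-(c j)^2)"
    unfolding px_def by (rule pi_facts[OF assms(15) gx gy])
  define hx where "hx = (\<lambda>i. if bk i = l then 1 else (0::real))"
  define hy where "hy = (\<lambda>i. if bk i = j then 1 else (0::real))"
  interpret D: dyn n pr cc hx hy "c l" "c j" px "1 - px"
  proof unfold_locales
    show "\<And>i. i < n \<Longrightarrow> hx (pr i) = hx i" "\<And>i. i < n \<Longrightarrow> hy (pr i) = hy i"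
      using PF by (auto simp: hx_def hy_def)
    show "\<And>i. 0 \<le> hx i" "\<And>i. hx i \<le> 1" "\<And>i. 0 \<le> hy i" "\<And>i. hy i \<le> 1" by (auto simp: hx_def hy_def)
    show "\<And>i. i < n \<Longrightarrow> hx i \<noteq> 0 \<Longrightarrow> cc i = c l" "\<And>i. i < n \<Longrightarrow> hy i \<noteq> 0 \<Longrightarrow> cc i = c j"
      by (auto simp: hx_def hy_def cc_def split: if_splits)
    show "\<And>i. i < n \<Longrightarrow> (cc i)^2 \<le> 1" by (rule ccb)
    show "(c l)^2 < 1" "(c j)^2 \<le> 1" by (rule gx, rule gy)
    show "0 \<le> px" "0 \<le> 1 - px" "px + (1 - px) = 1" "px * c l + (1 - px) * c j = 0"
      "0 < px * (1 - (c l)^2) + (1 - px) * (1 - (c j)^2)" using PI by auto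
  qed
  have v0c: "v0 \<in> carrier_vec n" using assms(7) n_def by simp
  have S1: "B.Mf v0 (\<lambda>_. 1) = 1" using assms(8) B.vnorm_Mf[OF v0c] by simp
  have posP: "B.Mf v0 (\<lambda>i. if bk i = z then 1 else 0) > 0"
    if pz: "blk_present m p0 p1 z" and nz: "blk_nonzero m p0 p1 v0 z" for z
  proof -
    obtain i where ii: "i \<in> blk_idx m p0 p1 z" and vi: "v0 $ i \<noteq> 0" using nz by (auto simp: blk_nonzero_def)
    have io: "i < n" "bk i = z" using idx_ok[OF m pz ii] unfolding n_def bk_def by auto
    have h1: "(\<lambda>i. (if bk i = z then 1 else 0) * (v0 $ i)^2) i \<le> (\<Sum>k\<in>{0..<n}. (if bk k = z then 1 else 0) * (v0 $ k)^2)"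
      by (rule member_le_sum) (use io in auto)
    have h2: "(\<lambda>i. (if bk i = z then 1 else 0) * (v0 $ i)^2) i = (v0 $ i)^2" using io by simp
    have h3: "(v0 $ i)^2 > 0" using vi by simp
    show ?thesis unfolding B.Mf_def using h1 h2 h3 by linarith
  qed
  have pl: "blk_present m p0 p1 l" using assms(10,11) by (simp add: blk_present_def)
  have Px0: "B.Mf v0 hx > 0" unfolding hx_def by (rule posP[OF pl assms(12)])
  have Py0: "B.Mf v0 hy > 0" unfolding hy_def by (rule posP[OF assms(13,14)])
  have I0: "D.Inv (D.Phi v0) v0"
    unfolding D.Inv_def D.Px_def D.Py_def using v0c S1 Px0 Py0 by simp
  show ?thesis using D.converge[OF LA LT I0] unfolding A_def .
qed


end
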